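(* Let $\Sigma$ be a theory and let $A,B \subseteq \mathcal{T}_Y$ be finite. Then $B \subseteq A_\Sigma^{\omega}$ if and only if $\Sigma \vdash A \Rightarrow B$.
   Context: $Y$ is a non-empty finite set of attributes and $\mathcal{T}_Y = \{y^i \mid y \in Y, i \in \mathbb{Z}\}$; $M + j = \{y^{i+j} \mid y^i \in M\}$. A formula is $A \Rightarrow B$ with $A,B$ finite subsets of $\mathcal{T}_Y$; a theory is a set of formulas. Syntactic closure: for $M \subseteq \mathcal{T}_Y$, $M_\Sigma^0 = M$, $M_\Sigma^{n+1} = M_\Sigma^n \cup \bigcup\{F+i \mid E \Rightarrow F \in \Sigma, i \in \mathbb{Z}, E+i \subseteq M_\Sigma^n\}$, and $M_\Sigma^\omega = \bigcup_{n=0}^\infty M_\Sigma^n$. Deduction rules (for arbitrary finite $A,B,C,D \subseteq \mathcal{T}_Y$, $i \in \mathbb{Z}$): (Ax) infer $A \cup B \Rightarrow A$; (Cut) from $A \Rightarrow B$ and $B \cup C \Rightarrow D$ infer $A \cup C \Rightarrow D$; (Shf) from $A \Rightarrow B$ infer $A+i \Rightarrow B+i$. A proof of $A \Rightarrow B$ by $\Sigma$ is a finite sequence of formulas ending with $A \Rightarrow B$ in which each member is in $\Sigma$ or is the conclusion of a rule whose hypotheses occur earlier; $\Sigma \vdash A \Rightarrow B$ means such a proof exists. *)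

theory Defs
  imports Main
begin

text \<open>Attributes form a finite nonempty type 'y (class finite; HOL types are nonempty).
  Temporal attributes y^i are pairs (y, i) with i :: int.  A formula A \<Rightarrow> B is a pair (A, B).\<close>

type_synonym 'y tattr = "'y \<times> int"
type_synonym 'y fml = "'y tattr set \<times> 'y tattr set"

definition shift :: "'y tattr set \<Rightarrow> int \<Rightarrow> 'y tattr set" where
  "shift M j = (\<lambda>(y, i). (y, i + j)) ` M"

definition is_formula :: "'y fml \<Rightarrow> bool" where
  "is_formula \<phi> \<longleftrightarrow> finite (fst \<phi>) \<and> finite (snd \<phi>)"

definition is_theory :: "'y fml set \<Rightarrow> bool" where
  "is_theory \<Sigma> \<longleftrightarrow> (\<forall>\<phi>\<in>\<Sigma>. is_formula \<phi>)"

definition clo_step :: "'y fml set \<Rightarrow> 'y tattr set \<Rightarrow> 'y tattr set" where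
  "clo_step \<Sigma> M = M \<union> \<Union>{shift F i | E F i. (E, F) \<in> \<Sigma> \<and> shift E i \<subseteq> M}"

definition clo_n :: "'y fml set \<Rightarrow> 'y tattr set \<Rightarrow> nat \<Rightarrow> 'y tattr set" where
  "clo_n \<Sigma> M n = (clo_step \<Sigma> ^^ n) M"

definition clo_omega :: "'y fml set \<Rightarrow> 'y tattr set \<Rightarrow> 'y tattr set" where
  "clo_omega \<Sigma> M = (\<Union>n. clo_n \<Sigma> M n)"

definition ax_inst :: "'y fml \<Rightarrow> bool" where
  "ax_inst \<phi> \<longleftrightarrow> (\<exists>A B. finite A \<and> finite B \<and> \<phi> = (A \<union> B, A))"

definition cut_inst :: "'y fml \<Rightarrow> 'y fml \<Rightarrow> 'y fml \<Rightarrow> bool" where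
  "cut_inst h1 h2 \<phi> \<longleftrightarrow> (\<exists>A B C D. finite A \<and> finite B \<and> finite C \<and> finite D \<and>
      h1 = (A, B) \<and> h2 = (B \<union> C, D) \<and> \<phi> = (A \<union> C, D))"

definition shf_inst :: "'y fml \<Rightarrow> 'y fml \<Rightarrow> bool" where
  "shf_inst h \<phi> \<longleftrightarrow> (\<exists>A B i. finite A \<and> finite B \<and>
      h = (A, B) \<and> \<phi> = (shift A i, shift B i))"

definition is_proof :: "'y fml set \<Rightarrow> 'y fml list \<Rightarrow> bool" where
  "is_proof \<Sigma> ps \<longleftrightarrow> ps \<noteq> [] \<and>
     (\<forall>k < length ps. ps ! k \<in> \<Sigma> \<or> ax_inst (ps ! k)
        \<or> (\<exists>j < k. \<exists>l < k. cut_inst (ps ! j) (ps ! l) (ps ! k))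
        \<or> (\<exists>j < k. shf_inst (ps ! j) (ps ! k)))"

definition provable :: "'y fml set \<Rightarrow> 'y fml \<Rightarrow> bool" where
  "provable \<Sigma> \<phi> \<longleftrightarrow> (\<exists>ps. is_proof \<Sigma> ps \<and> last ps = \<phi>)"

end

theory Submission
  imports Defs
begin

lemma single_proof: "x \<in> \<Sigma> \<or> ax_inst x \<Longrightarrow> is_proof \<Sigma> [x]"
  unfolding is_proof_def by auto

lemma app_proof:
  assumes "is_proof \<Sigma> xs" "is_proof \<Sigma> ys"
  shows "is_proof \<Sigma> (xs @ ys)"
  unfolding is_proof_def
proof (intro conjI allI impI)
  show "xs @ ys \<noteq> []" using assms(1) unfolding is_proof_def by simp
  fix k assume k: "k < length (xs @ ys)"
  let ?zs = "xs @ ys"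
  show "?zs ! k \<in> \<Sigma> \<or> ax_inst (?zs ! k)
        \<or> (\<exists>j < k. \<exists>l < k. cut_inst (?zs ! j) (?zs ! l) (?zs ! k))
        \<or> (\<exists>j < k. shf_inst (?zs ! j) (?zs ! k))"
  proof (cases "k < length xs")
    case True
    have "xs ! k \<in> \<Sigma> \<or> ax_inst (xs ! k)
        \<or> (\<exists>j < k. \<exists>l < k. cut_inst (xs ! j) (xs ! l) (xs ! k))
        \<or> (\<exists>j < k. shf_inst (xs ! j) (xs ! k))"
      using assms(1) True unfolding is_proof_def by blast
    moreover have "\<And>j. j < k \<Longrightarrow> ?zs ! j = xs ! j" using True by (simp add: nth_append)
    moreover have "?zs ! k = xs ! k" using True by (simp add: nth_append)
    ultimately show ?thesis by (metis (no_types, lifting))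
  next
    case False
    define k' where "k' = k - length xs"
    have k': "k' < length ys" "k = k' + length xs" using k False unfolding k'_def by auto
    have zk: "?zs ! k = ys ! k'" using k' by (simp add: nth_append)
    have zj: "\<And>j. ?zs ! (j + length xs) = ys ! j" by (simp add: nth_append)
    have "ys ! k' \<in> \<Sigma> \<or> ax_inst (ys ! k')
        \<or> (\<exists>j < k'. \<exists>l < k'. cut_inst (ys ! j) (ys ! l) (ys ! k'))
        \<or> (\<exists>j < k'. shf_inst (ys ! j) (ys ! k'))"
      using assms(2) k' unfolding is_proof_def by blast
    then show ?thesis
    proof (elim disjE exE conjE)
      fix j l assume "j < k'" "l < k'" "cut_inst (ys ! j) (ys ! l) (ys ! k')"
      then show ?thesis using zk zj[of j] zj[of l] k'(2)
        by (metis add_less_mono1)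
    next
      fix j assume "j < k'" "shf_inst (ys ! j) (ys ! k')"
      then show ?thesis using zk zj[of j] k'(2)
        by (metis add_less_mono1)
    qed (use zk in auto)
  qed
qed

lemma snoc_proof:
  assumes "is_proof \<Sigma> xs"
    and "(\<exists>j<length xs. \<exists>l<length xs. cut_inst (xs!j) (xs!l) x) \<or> (\<exists>j<length xs. shf_inst (xs!j) x)"
  shows "is_proof \<Sigma> (xs @ [x])"
  unfolding is_proof_def
proof (intro conjI allI impI)
  show "xs @ [x] \<noteq> []" by simp
  fix k assume k: "k < length (xs @ [x])"
  let ?zs = "xs @ [x]"
  show "?zs ! k \<in> \<Sigma> \<or> ax_inst (?zs ! k)
        \<or> (\<exists>j < k. \<exists>l < k. cut_inst (?zs ! j) (?zs ! l) (?zs ! k))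
        \<or> (\<exists>j < k. shf_inst (?zs ! j) (?zs ! k))"
  proof (cases "k < length xs")
    case True
    have "xs ! k \<in> \<Sigma> \<or> ax_inst (xs ! k)
        \<or> (\<exists>j < k. \<exists>l < k. cut_inst (xs ! j) (xs ! l) (xs ! k))
        \<or> (\<exists>j < k. shf_inst (xs ! j) (xs ! k))"
      using assms(1) True unfolding is_proof_def by blast
    moreover have "\<And>j. j < k \<Longrightarrow> ?zs ! j = xs ! j" using True by (simp add: nth_append)
    moreover have "?zs ! k = xs ! k" using True by (simp add: nth_append)
    ultimately show ?thesis by (metis (no_types, lifting))
  next
    case False
    then have kk: "k = length xs" using k by simp
    have zj: "\<And>j. j < length xs \<Longrightarrow> ?zs ! j = xs ! j" by (simp add: nth_append)
    show ?thesis using assms(2) kk zj by (auto simp: nth_append)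
  qed
qed

lemma last_idx: "xs \<noteq> [] \<Longrightarrow> (xs @ ys) ! (length xs - 1) = last xs"
  by (simp add: nth_append last_conv_nth)

lemma prov_mem: "x \<in> \<Sigma> \<Longrightarrow> provable \<Sigma> x"
  unfolding provable_def using single_proof[of x \<Sigma>] by (metis last.simps)

lemma prov_ax: "finite A \<Longrightarrow> finite B \<Longrightarrow> B \<subseteq> A \<Longrightarrow> provable \<Sigma> (A, B)"
proof -
  assume "finite A" "finite B" "B \<subseteq> A"
  then have "ax_inst (A, B)" unfolding ax_inst_def
    by (rule_tac x=B in exI, rule_tac x=A in exI) auto
  then show ?thesis unfolding provable_def using single_proof[of "(A,B)" \<Sigma>] by (metis last.simps)
qed

lemma prov_cut:
  assumes "provable \<Sigma> (A, B)" "provable \<Sigma> (B \<union> C, D)"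
    "finite A" "finite B" "finite C" "finite D"
  shows "provable \<Sigma> (A \<union> C, D)"
proof -
  obtain xs where xs: "is_proof \<Sigma> xs" "last xs = (A, B)" using assms(1) unfolding provable_def by blast
  obtain ys where ys: "is_proof \<Sigma> ys" "last ys = (B \<union> C, D)" using assms(2) unfolding provable_def by blast
  have ne: "xs \<noteq> []" "ys \<noteq> []" using xs ys unfolding is_proof_def by auto
  let ?zs = "xs @ ys"
  have z: "is_proof \<Sigma> ?zs" using app_proof xs ys by blast
  have j: "?zs ! (length xs - 1) = (A, B)" "length xs - 1 < length ?zs"
    using last_idx[OF ne(1), of ys] xs(2) apply simp using ne by (cases xs) auto
  have l: "?zs ! (length ?zs - 1) = (B \<union> C, D)" "length ?zs - 1 < length ?zs"
    using ys ne last_conv_nth[of "xs @ ys"] apply simp using ne by simp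
  have c: "cut_inst (A, B) (B \<union> C, D) (A \<union> C, D)"
    unfolding cut_inst_def using assms by blast
  have "is_proof \<Sigma> (?zs @ [(A \<union> C, D)])"
    apply (rule snoc_proof[OF z]) using j l c by metis
  then show ?thesis unfolding provable_def by (metis last_snoc)
qed

lemma prov_shf:
  assumes "provable \<Sigma> (A, B)" "finite A" "finite B"
  shows "provable \<Sigma> (shift A i, shift B i)"
proof -
  obtain xs where xs: "is_proof \<Sigma> xs" "last xs = (A, B)" using assms(1) unfolding provable_def by blast
  have ne: "xs \<noteq> []" using xs unfolding is_proof_def by auto
  have j: "xs ! (length xs - 1) = (A, B)" "length xs - 1 < length xs"
    using xs ne last_conv_nth[of xs] apply metis using ne by simp
  have c: "shf_inst (A, B) (shift A i, shift B i)"
    unfolding shf_inst_def using assms by blast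
  have "is_proof \<Sigma> (xs @ [(shift A i, shift B i)])"
    apply (rule snoc_proof[OF xs(1)]) using j c by metis
  then show ?thesis unfolding provable_def by (metis last_snoc)
qed

lemma prov_trans:
  assumes "provable \<Sigma> (A, B)" "provable \<Sigma> (B, D)" "finite A" "finite B" "finite D"
  shows "provable \<Sigma> (A, D)"
  using prov_cut[of \<Sigma> A B "{}" D] assms by simp

lemma prov_union:
  assumes "provable \<Sigma> (A, B1)" "provable \<Sigma> (A, B2)" "finite A" "finite B1" "finite B2"
  shows "provable \<Sigma> (A, B1 \<union> B2)"
proof -
  have "provable \<Sigma> (B2 \<union> B1, B1 \<union> B2)" using prov_ax assms by (metis finite_UnI sup_commute order_refl)
  then have "provable \<Sigma> (A \<union> B1, B1 \<union> B2)" using prov_cut[OF assms(2)] assms by simp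
  then have "provable \<Sigma> (B1 \<union> A, B1 \<union> B2)" by (simp add: sup_commute)
  then have "provable \<Sigma> (A \<union> A, B1 \<union> B2)" using prov_cut[OF assms(1), of A "B1 \<union> B2"] assms by simp
  then show ?thesis by simp
qed

lemma clo_n_Suc: "clo_n \<Sigma> M (Suc n) = clo_step \<Sigma> (clo_n \<Sigma> M n)"
  unfolding clo_n_def by simp

lemma clo_n_0: "clo_n \<Sigma> M 0 = M"
  unfolding clo_n_def by simp

lemma clo_n_mono_n: "m \<le> n \<Longrightarrow> clo_n \<Sigma> M m \<subseteq> clo_n \<Sigma> M n"
proof (induction n)
  case 0 then show ?case by simp
next
  case (Suc n)
  show ?case
  proof (cases "m = Suc n")
    case False
    then have "clo_n \<Sigma> M m \<subseteq> clo_n \<Sigma> M n" using Suc by simp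
    also have "\<dots> \<subseteq> clo_n \<Sigma> M (Suc n)" unfolding clo_n_Suc clo_step_def by blast
    finally show ?thesis .
  qed simp
qed

lemma finite_sub_clo_n:
  assumes "finite S" "S \<subseteq> clo_omega \<Sigma> M"
  shows "\<exists>n. S \<subseteq> clo_n \<Sigma> M n"
  using assms
proof (induction S rule: finite_induct)
  case empty then show ?case by simp
next
  case (insert x S)
  then obtain n where n: "S \<subseteq> clo_n \<Sigma> M n" by auto
  obtain m where m: "x \<in> clo_n \<Sigma> M m" using insert.prems unfolding clo_omega_def by auto
  have "S \<subseteq> clo_n \<Sigma> M (max n m)" using n clo_n_mono_n[of n "max n m"] by auto
  moreover have "x \<in> clo_n \<Sigma> M (max n m)" using m clo_n_mono_n[of m "max n m"] by auto
  ultimately show ?case by blast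
qed

lemma clo_step_mono: "X \<subseteq> Y \<Longrightarrow> clo_step \<Sigma> X \<subseteq> clo_step \<Sigma> Y"
  unfolding clo_step_def by blast

lemma clo_omega_trans:
  assumes th: "is_theory \<Sigma>" and Y: "Y \<subseteq> clo_omega \<Sigma> X"
  shows "clo_omega \<Sigma> Y \<subseteq> clo_omega \<Sigma> X"
proof -
  have "clo_n \<Sigma> Y n \<subseteq> clo_omega \<Sigma> X" for n
  proof (induction n)
    case 0 then show ?case using Y by (simp add: clo_n_0)
  next
    case (Suc n)
    show ?case
    proof
      fix x assume "x \<in> clo_n \<Sigma> Y (Suc n)"
      then have "x \<in> clo_n \<Sigma> Y n \<or> (\<exists>E F i. (E, F) \<in> \<Sigma> \<and> shift E i \<subseteq> clo_n \<Sigma> Y n \<and> x \<in> shift F i)"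
        unfolding clo_n_Suc clo_step_def by blast
      then show "x \<in> clo_omega \<Sigma> X"
      proof (elim disjE exE conjE)
        fix E F i assume EF: "(E, F) \<in> \<Sigma>" "shift E i \<subseteq> clo_n \<Sigma> Y n" "x \<in> shift F i"
        have "finite E" using th EF(1) unfolding is_theory_def is_formula_def by fastforce
        then have "finite (shift E i)" unfolding shift_def by simp
        moreover have "shift E i \<subseteq> clo_omega \<Sigma> X" using EF(2) Suc.IH by (rule subset_trans)
        ultimately obtain m where "shift E i \<subseteq> clo_n \<Sigma> X m"
          using finite_sub_clo_n by blast
        then have "x \<in> clo_n \<Sigma> X (Suc m)" using EF unfolding clo_n_Suc clo_step_def by blast
        then show ?thesis unfolding clo_omega_def by (rule UN_I[OF UNIV_I])
      next
        assume "x \<in> clo_n \<Sigma> Y n" then show ?thesis using Suc.IH by blast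
      qed
    qed
  qed
  then show ?thesis by (simp add: clo_omega_def UN_least)
qed

lemma clo_n_mono_set: "X \<subseteq> Y \<Longrightarrow> clo_n \<Sigma> X n \<subseteq> clo_n \<Sigma> Y n"
  by (induction n) (simp_all add: clo_n_0 clo_n_Suc clo_step_mono)

lemma clo_omega_mono: "X \<subseteq> Y \<Longrightarrow> clo_omega \<Sigma> X \<subseteq> clo_omega \<Sigma> Y"
  unfolding clo_omega_def by (rule UN_mono[OF order_refl clo_n_mono_set])

lemma clo_omega_ext: "X \<subseteq> clo_omega \<Sigma> X"
proof -
  have "clo_n \<Sigma> X 0 \<subseteq> clo_omega \<Sigma> X" unfolding clo_omega_def by (rule UN_upper[OF UNIV_I])
  then show ?thesis by (simp add: clo_n_0)
qed

lemma shift_shift: "shift (shift A i) j = shift A (i + j)"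
  unfolding shift_def image_image by (simp add: case_prod_beta add.assoc)

lemma shift_union: "shift (A \<union> B) i = shift A i \<union> shift B i"
  unfolding shift_def by auto

lemma step_incl: "(E, F) \<in> \<Sigma> \<Longrightarrow> shift E i \<subseteq> M \<Longrightarrow> shift F i \<subseteq> clo_step \<Sigma> M"
  unfolding clo_step_def
  apply (rule le_supI2)
  apply (rule Union_upper)
  by blast


definition good :: "'y fml set \<Rightarrow> 'y fml \<Rightarrow> bool" where
  "good \<Sigma> \<phi> \<longleftrightarrow> (\<forall>i. shift (snd \<phi>) i \<subseteq> clo_omega \<Sigma> (shift (fst \<phi>) i))"

lemma sound_lines:
  assumes th: "is_theory \<Sigma>" and p: "is_proof \<Sigma> ps"
  shows "k < length ps \<Longrightarrow> good \<Sigma> (ps ! k)"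
proof (induction k rule: less_induct)
  case (less k)
  have "ps ! k \<in> \<Sigma> \<or> ax_inst (ps ! k)
        \<or> (\<exists>j < k. \<exists>l < k. cut_inst (ps ! j) (ps ! l) (ps ! k))
        \<or> (\<exists>j < k. shf_inst (ps ! j) (ps ! k))" using p less(2) unfolding is_proof_def by blast
  then show ?case
  proof (elim disjE exE conjE)
    assume m: "ps ! k \<in> \<Sigma>"
    obtain E F where EF: "ps ! k = (E, F)" by fastforce
    show ?thesis unfolding good_def EF
    proof (simp, intro allI)
      fix i
      have "shift F i \<subseteq> clo_step \<Sigma> (shift E i)" using step_incl[OF m[unfolded EF] order_refl] .
      also have "\<dots> = clo_n \<Sigma> (shift E i) 1" unfolding clo_n_def by simp
      also have "\<dots> \<subseteq> clo_omega \<Sigma> (shift E i)" unfolding clo_omega_def by (rule UN_upper[OF UNIV_I])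
      finally show "shift F i \<subseteq> clo_omega \<Sigma> (shift E i)" .
    qed
  next
    assume "ax_inst (ps ! k)"
    then obtain A B where "ps ! k = (A \<union> B, A)" unfolding ax_inst_def by blast
    then show ?thesis unfolding good_def by (simp add: shift_union) (metis clo_omega_ext le_sup_iff)
  next
    fix j l assume jl: "j < k" "l < k" "cut_inst (ps ! j) (ps ! l) (ps ! k)"
    then obtain A B C D where eq: "ps ! j = (A, B)" "ps ! l = (B \<union> C, D)" "ps ! k = (A \<union> C, D)"
      unfolding cut_inst_def by blast
    have g1: "good \<Sigma> (A, B)" "good \<Sigma> (B \<union> C, D)"
      using less.IH[of j] less.IH[of l] less.prems jl eq by simp_all
    show ?thesis unfolding good_def eq
    proof (simp, intro allI)
      fix i
      have "shift B i \<subseteq> clo_omega \<Sigma> (shift A i \<union> shift C i)"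
        using g1(1) clo_omega_mono[of "shift A i" "shift A i \<union> shift C i" \<Sigma>] unfolding good_def by auto
      moreover have "shift C i \<subseteq> clo_omega \<Sigma> (shift A i \<union> shift C i)"
        using clo_omega_ext by blast
      ultimately have "clo_omega \<Sigma> (shift B i \<union> shift C i) \<subseteq> clo_omega \<Sigma> (shift A i \<union> shift C i)"
        using clo_omega_trans[OF th] by blast
      then show "shift D i \<subseteq> clo_omega \<Sigma> (shift (A \<union> C) i)"
        using g1(2) unfolding good_def by (auto simp: shift_union)
    qed
  next
    fix j assume jl: "j < k" "shf_inst (ps ! j) (ps ! k)"
    then obtain A B i where eq: "ps ! j = (A, B)" "ps ! k = (shift A i, shift B i)"
      unfolding shf_inst_def by blast
    have "good \<Sigma> (A, B)" using less.IH[of j] less.prems jl eq by simp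
    then show ?thesis unfolding good_def eq by (simp add: shift_shift)
  qed
qed

lemma complete_n:
  assumes th: "is_theory \<Sigma>" and A: "finite A"
  shows "finite B \<Longrightarrow> B \<subseteq> clo_n \<Sigma> A n \<Longrightarrow> provable \<Sigma> (A, B)"
proof (induction n arbitrary: B)
  case 0 then show ?case using prov_ax A by (simp add: clo_n_0)
next
  case (Suc n)
  have single: "provable \<Sigma> (A, {b})" if b: "b \<in> clo_n \<Sigma> A (Suc n)" for b
  proof -
    from b have "b \<in> clo_n \<Sigma> A n \<or> (\<exists>E F i. (E, F) \<in> \<Sigma> \<and> shift E i \<subseteq> clo_n \<Sigma> A n \<and> b \<in> shift F i)"
      unfolding clo_n_Suc clo_step_def by blast
    then show ?thesis
    proof (elim disjE exE conjE)
      assume "b \<in> clo_n \<Sigma> A n" then show ?thesis using Suc.IH[of "{b}"] by simp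
    next
      fix E F i assume EF: "(E, F) \<in> \<Sigma>" "shift E i \<subseteq> clo_n \<Sigma> A n" "b \<in> shift F i"
      have fin: "finite E" "finite F" using th EF(1) unfolding is_theory_def is_formula_def by auto
      then have fin2: "finite (shift E i)" "finite (shift F i)" unfolding shift_def by auto
      have p1: "provable \<Sigma> (A, shift E i)" using Suc.IH fin2 EF by blast
      have p2: "provable \<Sigma> (shift E i, shift F i)" using prov_shf[OF prov_mem[OF EF(1)] fin] .
      have p3: "provable \<Sigma> (shift F i, {b})" by (intro prov_ax) (use fin2 EF in auto)
      show ?thesis using prov_trans[OF prov_trans[OF p1 p2] p3] A fin2 by simp
    qed
  qed
  have "finite B \<Longrightarrow> B \<subseteq> clo_n \<Sigma> A (Suc n) \<Longrightarrow> provable \<Sigma> (A, B)" for B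
  proof (induction B rule: finite_induct)
    case empty then show ?case by (intro prov_ax) (use A in auto)
  next
    case (insert x F)
    then have "provable \<Sigma> (A, {x} \<union> F)" using prov_union[of \<Sigma> A "{x}" F] single[of x] A by simp
    then show ?case by simp
  qed
  then show ?case using Suc.prems by blast
qed

theorem lemma4:
  fixes \<Sigma> :: "('y::finite) fml set" and A B :: "'y tattr set"
  assumes "is_theory \<Sigma>" and "finite A" and "finite B"
  shows "B \<subseteq> clo_omega \<Sigma> A \<longleftrightarrow> provable \<Sigma> (A, B)"
proof
  assume "B \<subseteq> clo_omega \<Sigma> A"
  then obtain n where "B \<subseteq> clo_n \<Sigma> A n" using finite_sub_clo_n[OF assms(3)] by blast
  then show "provable \<Sigma> (A, B)" using complete_n[OF assms(1,2) assms(3)] by simp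
next
  assume "provable \<Sigma> (A, B)"
  then obtain ps where ps: "is_proof \<Sigma> ps" "last ps = (A, B)" unfolding provable_def by blast
  have ne: "ps \<noteq> []" using ps unfolding is_proof_def by auto
  have "good \<Sigma> (ps ! (length ps - 1))" using sound_lines[OF assms(1) ps(1)] ne by simp
  then have "good \<Sigma> (A, B)" using ps ne by (simp add: last_conv_nth)
  then have "shift B 0 \<subseteq> clo_omega \<Sigma> (shift A 0)" unfolding good_def by auto
  moreover have "\<And>X. shift X 0 = X" unfolding shift_def by auto
  ultimately show "B \<subseteq> clo_omega \<Sigma> A" by metis
qed

end
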